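(* In partially synchronous systems, there is no deterministic protocol that solves Byzantine consensus (Validity, Agreement, Termination) in every system whose knowledge connectivity graph belongs to $\mathcal{G}_{di}$ when each process $i$ is given only its participant detector $PD_i$ as input and no process knows the fault threshold $f$. (This holds even with digital signatures, and even when faults are only crashes.)
   Context: System: finite set $\Pi$ of processes, partially synchronous (an unknown GST after which messages between correct processes arrive within an unknown $\delta$), a set $F$ of faulty processes with $|F|\le f$ for some fault threshold $f$, reliable authenticated channels. Each process $i$ has a participant detector $PD_i\subseteq\Pi$ (the processes it initially knows) and may only message processes it currently knows. The knowledge connectivity graph is $G_{di}=(\Pi,\{(i,j):j\in PD_i\})$. A digraph belongs to $k$-OSR PD if its underlying undirected graph is connected, its condensation has exactly one sink component, that sink is $k$-strongly connected, and every vertex outside it has $k$ node-disjoint paths to every vertex in it. $G_{safe}=G_{di}[\Pi\setminus F]$. $\mathcal{G}_{di}$: graphs whose $G_{safe}$ is in $(f+1)$-OSR PD with safe sink of size $\ge 2f+1$. Consensus: each correct process proposes a valid value (w.r.t. a predicate $\mathtt{valid}$); Validity: a correct process decides a valid value proposed by some process; Agreement: all correct processes decide the same value; Termination: every correct process eventually decides. *)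

theory Defs
  imports Main
begin

text \<open>A digraph is given by a vertex set V and an edge relation E; only edges with
both endpoints in V are relevant (so (C, E) is the subgraph induced by C).\<close>

definition is_path :: "'a set \<Rightarrow> ('a \<times> 'a) set \<Rightarrow> 'a list \<Rightarrow> 'a \<Rightarrow> 'a \<Rightarrow> bool" where
  "is_path V E xs u v \<longleftrightarrow> xs \<noteq> [] \<and> hd xs = u \<and> last xs = v \<and> distinct xs \<and> set xs \<subseteq> V \<and>
     (\<forall>k < length xs - 1. (xs ! k, xs ! Suc k) \<in> E)"

definition internal :: "'a list \<Rightarrow> 'a set" where
  "internal xs = set (butlast (tl xs))"

definition disjoint_paths :: "'a set \<Rightarrow> ('a \<times> 'a) set \<Rightarrow> nat \<Rightarrow> 'a \<Rightarrow> 'a \<Rightarrow> bool" where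
  "disjoint_paths V E k u v \<longleftrightarrow> (\<exists>P. finite P \<and> card P = k \<and> (\<forall>p\<in>P. is_path V E p u v) \<and>
      (\<forall>p\<in>P. \<forall>q\<in>P. p \<noteq> q \<longrightarrow> internal p \<inter> internal q = {}))"

definition k_strongly_connected :: "'a set \<Rightarrow> ('a \<times> 'a) set \<Rightarrow> nat \<Rightarrow> bool" where
  "k_strongly_connected V E k \<longleftrightarrow> (\<forall>u\<in>V. \<forall>v\<in>V. u \<noteq> v \<longrightarrow> disjoint_paths V E k u v)"

definition reach :: "'a set \<Rightarrow> ('a \<times> 'a) set \<Rightarrow> 'a \<Rightarrow> 'a \<Rightarrow> bool" where
  "reach V E u v \<longleftrightarrow> (u, v) \<in> (E \<inter> V \<times> V)\<^sup>*"

definition underlying_connected :: "'a set \<Rightarrow> ('a \<times> 'a) set \<Rightarrow> bool" where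
  "underlying_connected V E \<longleftrightarrow> (\<forall>u\<in>V. \<forall>v\<in>V. (u, v) \<in> ((E \<union> E\<inverse>) \<inter> V \<times> V)\<^sup>*)"

text \<open>C is a strongly connected component of (V,E) which is a sink of the condensation\<close>
definition sink_component :: "'a set \<Rightarrow> ('a \<times> 'a) set \<Rightarrow> 'a set \<Rightarrow> bool" where
  "sink_component V E C \<longleftrightarrow> C \<noteq> {} \<and> C \<subseteq> V \<and>
     (\<forall>x\<in>C. \<forall>y\<in>V. (reach V E x y \<and> reach V E y x) \<longleftrightarrow> y \<in> C) \<and>
     (\<forall>x\<in>C. \<forall>y\<in>V. (x, y) \<in> E \<longrightarrow> y \<in> C)"

definition k_OSR :: "nat \<Rightarrow> 'a set \<Rightarrow> ('a \<times> 'a) set \<Rightarrow> bool" where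
  "k_OSR k V E \<longleftrightarrow> underlying_connected V E \<and> (\<exists>!C. sink_component V E C) \<and>
     (\<forall>C. sink_component V E C \<longrightarrow>
        k_strongly_connected C E k \<and> (\<forall>u\<in>V - C. \<forall>v\<in>C. disjoint_paths V E k u v))"

definition kc_edges :: "nat set \<Rightarrow> (nat \<Rightarrow> nat set) \<Rightarrow> (nat \<times> nat) set" where
  "kc_edges Pi PD = {(i, j). i \<in> Pi \<and> j \<in> PD i}"

definition in_G_di :: "nat set \<Rightarrow> (nat \<Rightarrow> nat set) \<Rightarrow> nat \<Rightarrow> nat set \<Rightarrow> bool" where
  "in_G_di Pi PD f F \<longleftrightarrow> k_OSR (f + 1) (Pi - F) (kc_edges Pi PD) \<and>
     (\<forall>C. sink_component (Pi - F) (kc_edges Pi PD) C \<longrightarrow> card C \<ge> 2 * f + 1)"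

definition admissible_system :: "nat set \<Rightarrow> (nat \<Rightarrow> nat set) \<Rightarrow> nat \<Rightarrow> nat set \<Rightarrow> bool" where
  "admissible_system Pi PD f F \<longleftrightarrow> finite Pi \<and> (\<forall>i\<in>Pi. PD i \<subseteq> Pi) \<and> F \<subseteq> Pi \<and> card F \<le> f \<and>
     in_G_di Pi PD f F"

text \<open>A deterministic protocol: the initial state of a process depends only on its own id,
its participant detector and its proposal (neither Pi nor f is an input). In each step a
process receives a set of (sender, payload, attached ids) and produces a new state and a
set of (destination, payload, attached ids). Attached ids model identities conveyed in
messages; they must be known to the sender.\<close>
record ('s, 'v, 'm) protocol =
  p_init :: "nat \<Rightarrow> nat set \<Rightarrow> 'v \<Rightarrow> 's"
  p_step :: "'s \<Rightarrow> (nat \<times> 'm \<times> nat set) set \<Rightarrow> 's \<times> (nat \<times> 'm \<times> nat set) set"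
  p_decision :: "'s \<Rightarrow> 'v option"

text \<open>Configuration at global time t: states, known sets, and the messages sent by each
process at each earlier time. Processes in F crash at time c i (take no step at any
time >= c i); D s t0 r x is the delivery time of message x sent by s to r at time t0.
Processes may only send to processes they currently know (other sends are dropped).\<close>
primrec cfg :: "('s, 'v, 'm) protocol \<Rightarrow> nat set \<Rightarrow> (nat \<Rightarrow> nat set) \<Rightarrow> nat set \<Rightarrow> (nat \<Rightarrow> 'v)
    \<Rightarrow> (nat \<Rightarrow> nat) \<Rightarrow> (nat \<Rightarrow> nat \<Rightarrow> nat \<Rightarrow> 'm \<times> nat set \<Rightarrow> nat) \<Rightarrow> nat
    \<Rightarrow> (nat \<Rightarrow> 's) \<times> (nat \<Rightarrow> nat set) \<times> (nat \<Rightarrow> nat \<Rightarrow> (nat \<times> 'm \<times> nat set) set)" where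
  "cfg P Pi PD F prop c D 0 =
     (\<lambda>i. p_init P i (PD i) (prop i), \<lambda>i. insert i (PD i), \<lambda>i t0. {})"
| "cfg P Pi PD F prop c D (Suc t) =
     (let (st, kn, sn) = cfg P Pi PD F prop c D t;
          alive = (\<lambda>i. i \<in> Pi \<and> (i \<in> F \<longrightarrow> t < c i));
          rcv = (\<lambda>i. {(s, m, ids). \<exists>t0<t. (i, m, ids) \<in> sn s t0 \<and> D s t0 i (m, ids) = t});
          kn' = (\<lambda>i. if alive i then kn i \<union> {s. \<exists>m ids. (s, m, ids) \<in> rcv i}
                                   \<union> \<Union>{ids. \<exists>s m. (s, m, ids) \<in> rcv i}
                     else kn i);
          out = (\<lambda>i. if alive i then {(j, m, ids) \<in> snd (p_step P (st i) (rcv i)). j \<in> kn' i \<and> ids \<subseteq> kn' i}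
                     else {})
      in (\<lambda>i. if alive i then fst (p_step P (st i) (rcv i)) else st i,
          kn',
          \<lambda>i t0. if t0 = t then out i else sn i t0))"

definition state_at :: "('s, 'v, 'm) protocol \<Rightarrow> nat set \<Rightarrow> (nat \<Rightarrow> nat set) \<Rightarrow> nat set \<Rightarrow> (nat \<Rightarrow> 'v)
    \<Rightarrow> (nat \<Rightarrow> nat) \<Rightarrow> (nat \<Rightarrow> nat \<Rightarrow> nat \<Rightarrow> 'm \<times> nat set \<Rightarrow> nat) \<Rightarrow> nat \<Rightarrow> nat \<Rightarrow> 's" where
  "state_at P Pi PD F prop c D t i = fst (cfg P Pi PD F prop c D t) i"

definition decides :: "('s, 'v, 'm) protocol \<Rightarrow> nat set \<Rightarrow> (nat \<Rightarrow> nat set) \<Rightarrow> nat set \<Rightarrow> (nat \<Rightarrow> 'v)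
    \<Rightarrow> (nat \<Rightarrow> nat) \<Rightarrow> (nat \<Rightarrow> nat \<Rightarrow> nat \<Rightarrow> 'm \<times> nat set \<Rightarrow> nat) \<Rightarrow> nat \<Rightarrow> 'v \<Rightarrow> bool" where
  "decides P Pi PD F prop c D i v \<longleftrightarrow>
     (\<exists>t. p_decision P (state_at P Pi PD F prop c D t i) = Some v \<and>
          (\<forall>t'<t. p_decision P (state_at P Pi PD F prop c D t' i) = None))"

definition partially_synchronous :: "nat set \<Rightarrow> nat set \<Rightarrow> (nat \<Rightarrow> nat \<Rightarrow> nat \<Rightarrow> 'm \<times> nat set \<Rightarrow> nat) \<Rightarrow> bool" where
  "partially_synchronous Pi F D \<longleftrightarrow> (\<forall>s t0 r x. t0 < D s t0 r x) \<and>
     (\<exists>GST \<delta>. \<forall>s\<in>Pi - F. \<forall>r\<in>Pi - F. \<forall>t0 x. D s t0 r x \<le> max t0 GST + \<delta>)"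

definition solves_consensus :: "('v \<Rightarrow> bool) \<Rightarrow> ('s, 'v, 'm) protocol \<Rightarrow> nat set \<Rightarrow> (nat \<Rightarrow> nat set) \<Rightarrow> nat set \<Rightarrow> bool" where
  "solves_consensus valid P Pi PD F \<longleftrightarrow>
     (\<forall>prop c D. (\<forall>i\<in>Pi - F. valid (prop i)) \<and> partially_synchronous Pi F D \<longrightarrow>
        (\<forall>i\<in>Pi - F. \<forall>v. decides P Pi PD F prop c D i v \<longrightarrow> valid v \<and> (\<exists>j\<in>Pi. prop j = v)) \<and>
        (\<forall>i\<in>Pi - F. \<forall>j\<in>Pi - F. \<forall>v w. decides P Pi PD F prop c D i v \<and> decides P Pi PD F prop c D j w \<longrightarrow> v = w) \<and>
        (\<forall>i\<in>Pi - F. \<exists>v. decides P Pi PD F prop c D i v))"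

end

theory Submission
  imports Defs
begin

lemma never_alive_sn:
  assumes "\<forall>t. \<not> (s \<in> Pi \<and> (s \<in> F \<longrightarrow> t < c s))"
  shows "snd (snd (cfg P Pi PD F prop c D t)) s t0 = {}"
proof (induction t arbitrary: t0)
  case 0 show ?case by simp
next
  case (Suc t)
  obtain st kn sn where e: "cfg P Pi PD F prop c D t = (st,kn,sn)"
    by (cases "cfg P Pi PD F prop c D t") auto
  have "sn s t0 = {}" for t0 using Suc.IH[of t0] e by simp
  moreover have "\<not> (s\<in>Pi \<and> (s\<in>F \<longrightarrow> t < c s))" using assms by blast
  ultimately show ?case by (auto simp add: e Let_def)
qed

lemma locality:
  assumes G1: "G \<subseteq> Pi" "G \<inter> F = {}" and G2: "G \<subseteq> Pi2" "G \<inter> F2 = {}"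
  and same: "\<forall>i\<in>G. PD i = PD2 i \<and> prop i = prop2 i"
  and DG: "\<forall>s\<in>G. \<forall>r\<in>G. \<forall>t0 x. D s t0 r x = D2 s t0 r x"
  and out1: "\<forall>s. s \<notin> G \<longrightarrow> (\<forall>r\<in>G. \<forall>t0 x. T \<le> D s t0 r x) \<or> (\<forall>t. \<not>(s\<in>Pi \<and> (s\<in>F \<longrightarrow> t < c s)))"
  and out2: "\<forall>s. s \<notin> G \<longrightarrow> (\<forall>r\<in>G. \<forall>t0 x. T \<le> D2 s t0 r x) \<or> (\<forall>t. \<not>(s\<in>Pi2 \<and> (s\<in>F2 \<longrightarrow> t < c2 s)))"
  shows "t \<le> T \<Longrightarrow> \<forall>i\<in>G. fst (cfg P Pi PD F prop c D t) i = fst (cfg P Pi2 PD2 F2 prop2 c2 D2 t) i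
      \<and> fst (snd (cfg P Pi PD F prop c D t)) i = fst (snd (cfg P Pi2 PD2 F2 prop2 c2 D2 t)) i
      \<and> (\<forall>t0. snd (snd (cfg P Pi PD F prop c D t)) i t0 = snd (snd (cfg P Pi2 PD2 F2 prop2 c2 D2 t)) i t0)"
proof (induction t)
  case 0 thus ?case using same by simp
next
  case (Suc t)
  obtain st kn sn where e1: "cfg P Pi PD F prop c D t = (st,kn,sn)"
    by (cases "cfg P Pi PD F prop c D t") auto
  obtain st2 kn2 sn2 where e2: "cfg P Pi2 PD2 F2 prop2 c2 D2 t = (st2,kn2,sn2)"
    by (cases "cfg P Pi2 PD2 F2 prop2 c2 D2 t") auto
  have IH: "\<forall>i\<in>G. st i = st2 i \<and> kn i = kn2 i \<and> (\<forall>t0. sn i t0 = sn2 i t0)"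
    using Suc by (simp add: e1 e2)
  have tT: "t < T" using Suc.prems by simp
  have nv1: "sn s t0 = {}" if "\<forall>t. \<not>(s\<in>Pi \<and> (s\<in>F \<longrightarrow> t < c s))" for s t0
  proof -
    have "snd (snd (cfg P Pi PD F prop c D t)) s t0 = {}" using that by (rule never_alive_sn)
    then show ?thesis using e1 by simp
  qed
  have nv2: "sn2 s t0 = {}" if "\<forall>t. \<not>(s\<in>Pi2 \<and> (s\<in>F2 \<longrightarrow> t < c2 s))" for s t0
  proof -
    have "snd (snd (cfg P Pi2 PD2 F2 prop2 c2 D2 t)) s t0 = {}" using that by (rule never_alive_sn)
    then show ?thesis using e2 by simp
  qed
  have key: "(\<exists>t0<t. (i,m,ids)\<in>sn s t0 \<and> D s t0 i (m,ids) = t) \<longleftrightarrow>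
             (\<exists>t0<t. (i,m,ids)\<in>sn2 s t0 \<and> D2 s t0 i (m,ids) = t)" if "i \<in> G" for i s m ids
  proof (cases "s \<in> G")
    case True then show ?thesis using IH DG that by auto
  next
    case False
    have a: "\<not> (\<exists>t0<t. (i,m,ids)\<in>sn s t0 \<and> D s t0 i (m,ids) = t)"
    proof -
      from out1 False consider "\<forall>r\<in>G. \<forall>t0 x. T \<le> D s t0 r x" | "\<forall>t. \<not>(s\<in>Pi \<and> (s\<in>F \<longrightarrow> t < c s))" by blast
      then show ?thesis
      proof cases
        case 1
        have "T \<le> D s t0 i (m,ids)" for t0 using 1 \<open>i \<in> G\<close> by blast
        then show ?thesis using tT by (metis not_le)
      next
        case 2 then show ?thesis using nv1[OF 2] by simp
      qed
    qed
    have b: "\<not> (\<exists>t0<t. (i,m,ids)\<in>sn2 s t0 \<and> D2 s t0 i (m,ids) = t)"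
    proof -
      from out2 False consider "\<forall>r\<in>G. \<forall>t0 x. T \<le> D2 s t0 r x" | "\<forall>t. \<not>(s\<in>Pi2 \<and> (s\<in>F2 \<longrightarrow> t < c2 s))" by blast
      then show ?thesis
      proof cases
        case 1
        have "T \<le> D2 s t0 i (m,ids)" for t0 using 1 \<open>i \<in> G\<close> by blast
        then show ?thesis using tT by (metis not_le)
      next
        case 2 then show ?thesis using nv2[OF 2] by simp
      qed
    qed
    show ?thesis using a b by blast
  qed
  have rcv: "\<forall>i\<in>G. {(s, m, ids). \<exists>t0<t. (i, m, ids) \<in> sn s t0 \<and> D s t0 i (m, ids) = t}
      = {(s, m, ids). \<exists>t0<t. (i, m, ids) \<in> sn2 s t0 \<and> D2 s t0 i (m, ids) = t}"
    using key by blast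
  have alive: "\<forall>i\<in>G. (i \<in> Pi \<and> (i\<in>F \<longrightarrow> t < c i)) \<and> (i\<in>Pi2 \<and> (i\<in>F2 \<longrightarrow> t < c2 i))"
    using G1 G2 by auto
  show ?case using IH rcv alive by (simp add: e1 e2 Let_def)
qed


lemma dp1:
  assumes "u \<noteq> v" "u \<in> V" "v \<in> V" "(u,v) \<in> E"
  shows "disjoint_paths V E 1 u v"
  unfolding disjoint_paths_def
  apply (rule exI[of _ "{[u,v]}"])
  using assms by (auto simp: is_path_def)

lemma dp2:
  assumes "u \<noteq> v" "u \<noteq> w" "v \<noteq> w" "u \<in> V" "v \<in> V" "w \<in> V"
    "(u,v) \<in> E" "(u,w) \<in> E" "(w,v) \<in> E"
  shows "disjoint_paths V E 2 u v"
  unfolding disjoint_paths_def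
  apply (rule exI[of _ "{[u,v],[u,w,v]}"])
  using assms by (auto simp: is_path_def internal_def less_Suc_eq nth_Cons')

definition PD0 :: "nat \<Rightarrow> nat set" where
  "PD0 i = (if i = 0 then {} else {0,1,2,3} - {i})"

lemma E0: "kc_edges {0} PD0 = {}"
  by (auto simp: kc_edges_def PD0_def)

lemma E4: "kc_edges {0,1,2,3} PD0 = {(i,j). i \<in> {1,2,3} \<and> j \<in> {0,1,2,3} \<and> j \<noteq> i}"
  by (auto simp: kc_edges_def PD0_def)

lemma adm0: "admissible_system {0} PD0 0 {}"
proof -
  have sc: "sink_component {0} {} C \<longleftrightarrow> C = {0}" for C :: "nat set"
    by (auto simp: sink_component_def reach_def)
  show ?thesis
    unfolding admissible_system_def in_G_di_def k_OSR_def E0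
    by (auto simp: PD0_def underlying_connected_def sc k_strongly_connected_def)
qed


lemma Pi4_minus0: "{0,1,2,3::nat} - {0} = {1,2,3}" by auto

lemma reach1: "x \<in> {1,2,3} \<Longrightarrow> y \<in> {1,2,3} \<Longrightarrow> reach {1,2,3} (kc_edges {0,1,2,3} PD0) x y"
  unfolding reach_def E4
  by (cases "x = y") (auto intro!: r_into_rtrancl)

lemma sc_complete:
  assumes rall: "\<forall>x\<in>V. \<forall>y\<in>V. reach V E x y" and ne: "V \<noteq> {}"
  shows "sink_component V E C \<longleftrightarrow> C = V"
proof
  assume "sink_component V E C"
  then obtain x where x: "x \<in> C" "C \<subseteq> V"
    and h: "\<forall>y\<in>V. (reach V E x y \<and> reach V E y x) \<longleftrightarrow> y \<in> C"
    unfolding sink_component_def by blast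
  have "y \<in> C" if "y \<in> V" for y using rall x h that by blast
  then show "C = V" using x by blast
next
  assume C: "C = V"
  then show "sink_component V E C"
    unfolding sink_component_def using rall ne by blast
qed

lemma adm1: "admissible_system {0,1,2,3} PD0 1 {0}"
proof -
  let ?V = "{1,2,3::nat}" and ?E = "kc_edges {0,1,2,3} PD0"
  have rall: "\<forall>x\<in>?V. \<forall>y\<in>?V. reach ?V ?E x y" using reach1 by blast
  have sc: "sink_component ?V ?E C \<longleftrightarrow> C = ?V" for C
    by (rule sc_complete[OF rall]) simp
  have ksc: "k_strongly_connected ?V ?E 2"
    unfolding k_strongly_connected_def
  proof (intro ballI impI)
    fix u v assume uv: "u \<in> ?V" "v \<in> ?V" "u \<noteq> v"
    obtain w where w: "w \<in> ?V" "w \<noteq> u" "w \<noteq> v" using uv by (cases "u = 1"; cases "v = 1"; cases "u = 2"; cases "v = 2") auto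
    have eV: "a \<in> ?V \<Longrightarrow> b \<in> ?V \<Longrightarrow> a \<noteq> b \<Longrightarrow> (a,b) \<in> ?E" for a b
      by (auto simp: kc_edges_def PD0_def)
    show "disjoint_paths ?V ?E 2 u v"
      using uv w by (intro dp2[of u v w] eV) auto
  qed
  have uc: "underlying_connected ?V ?E"
    unfolding underlying_connected_def
  proof (intro ballI)
    fix u v assume "u \<in> ?V" "v \<in> ?V"
    then have "(u,v) \<in> (?E \<inter> ?V \<times> ?V)\<^sup>*" using reach1 unfolding reach_def by blast
    then show "(u, v) \<in> ((?E \<union> ?E\<inverse>) \<inter> ?V \<times> ?V)\<^sup>*"
      by (rule rtrancl_mono[THEN subsetD, rotated]) blast
  qed
  have pd: "\<forall>i\<in>{0,1,2,3::nat}. PD0 i \<subseteq> {0,1,2,3}" by (auto simp: PD0_def)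
  have osr: "k_OSR 2 ?V ?E"
    unfolding k_OSR_def using sc ksc uc by auto
  have cs: "\<forall>C. sink_component ?V ?E C \<longrightarrow> card C \<ge> 2 * 1 + 1" using sc by simp
  show ?thesis
    unfolding admissible_system_def in_G_di_def Pi4_minus0
  proof (intro conjI)
    show "k_OSR (1 + 1) ?V ?E" using osr by (simp only: one_add_one)
    show "\<forall>C. sink_component ?V ?E C \<longrightarrow> 2 * 1 + 1 \<le> card C" using cs .
  qed (use pd in auto)
qed

lemma reach0: "reach {0,1,2,3} (kc_edges {0,1,2,3} PD0) 0 y \<Longrightarrow> y = 0"
  unfolding reach_def E4
  by (erule converse_rtranclE) auto

lemma sc_point:
  assumes zV: "z \<in> V" and into: "\<forall>x\<in>V. x \<noteq> z \<longrightarrow> (x, z) \<in> E" and noout: "\<forall>y. (z, y) \<notin> E"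
  shows "sink_component V E C \<longleftrightarrow> C = {z}"
proof -
  have rz: "reach V E z y \<Longrightarrow> y = z" for y
    unfolding reach_def by (erule converse_rtranclE) (use noout in auto)
  have rzz: "reach V E z z" unfolding reach_def by simp
  show ?thesis
  proof
    assume "sink_component V E C"
    then obtain x where x: "x \<in> C" "C \<subseteq> V"
      and h: "\<forall>x\<in>C. \<forall>y\<in>V. (reach V E x y \<and> reach V E y x) \<longleftrightarrow> y \<in> C"
      and cl: "\<forall>x\<in>C. \<forall>y\<in>V. (x, y) \<in> E \<longrightarrow> y \<in> C"
      unfolding sink_component_def by blast
    have z: "z \<in> C"
    proof (cases "x = z")
      case True then show ?thesis using x by simp
    next
      case False then show ?thesis using x cl into zV by blast
    qed
    have "y = z" if "y \<in> C" for y
    proof -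
      have "reach V E z y" using h z that x(2) by blast
      then show ?thesis by (rule rz)
    qed
    then show "C = {z}" using z by blast
  next
    assume C: "C = {z}"
    have "\<forall>y\<in>V. (reach V E z y \<and> reach V E y z) \<longleftrightarrow> y = z" using rz rzz by blast
    then show "sink_component V E C" unfolding sink_component_def C using zV noout by blast
  qed
qed

lemma adm2: "admissible_system {0,1,2,3} PD0 0 {}"
proof -
  let ?V = "{0,1,2,3::nat}" and ?E = "kc_edges {0,1,2,3} PD0"
  have e0: "x \<in> ?V \<Longrightarrow> x \<noteq> 0 \<Longrightarrow> (x,0) \<in> ?E" for x by (auto simp: kc_edges_def PD0_def)
  have r0: "x \<in> ?V \<Longrightarrow> reach ?V ?E x 0" for x
    using e0 unfolding reach_def by (cases "x = 0") (auto intro!: r_into_rtrancl)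
  have noout: "\<forall>y. (0::nat, y) \<notin> ?E" by (auto simp: kc_edges_def PD0_def)
  have sc: "sink_component ?V ?E C \<longleftrightarrow> C = {0}" for C
    by (rule sc_point) (use e0 noout in auto)
  have uc: "underlying_connected ?V ?E"
    unfolding underlying_connected_def
  proof (intro ballI)
    fix u v assume uv: "u \<in> ?V" "v \<in> ?V"
    have a: "(u,0) \<in> ((?E \<union> ?E\<inverse>) \<inter> ?V \<times> ?V)\<^sup>*"
      using uv e0 by (cases "u = 0") (auto intro!: r_into_rtrancl)
    have b: "(0,v) \<in> ((?E \<union> ?E\<inverse>) \<inter> ?V \<times> ?V)\<^sup>*"
      using uv e0 by (cases "v = 0") (auto intro!: r_into_rtrancl)
    show "(u, v) \<in> ((?E \<union> ?E\<inverse>) \<inter> ?V \<times> ?V)\<^sup>*" using a b by (rule rtrancl_trans)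
  qed
  have dp: "\<forall>u\<in>?V - {0}. \<forall>v\<in>{0}. disjoint_paths ?V ?E 1 u v"
  proof (intro ballI)
    fix u v :: nat assume uv: "u \<in> ?V - {0}" "v \<in> {0}"
    then have v0: "v = 0" and uV: "u \<in> ?V" and u0: "u \<noteq> 0" by auto
    show "disjoint_paths ?V ?E 1 u v" unfolding v0
      by (rule dp1) (use uV u0 e0 in auto)
  qed
  have ks: "k_strongly_connected {0} ?E 1" unfolding k_strongly_connected_def by blast
  have ex1: "\<exists>!C. sink_component ?V ?E C"
  proof (rule ex1I[of _ "{0}"])
    show "sink_component ?V ?E {0}" using sc[of "{0}"] by simp
    show "C = {0}" if "sink_component ?V ?E C" for C using sc[of C] that by simp
  qed
  have all: "\<forall>C. sink_component ?V ?E C \<longrightarrow>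
        k_strongly_connected C ?E 1 \<and> (\<forall>u\<in>?V - C. \<forall>v\<in>C. disjoint_paths ?V ?E 1 u v)"
  proof (intro allI impI)
    fix C assume "sink_component ?V ?E C"
    then have C: "C = {0}" using sc[of C] by simp
    show "k_strongly_connected C ?E 1 \<and> (\<forall>u\<in>?V - C. \<forall>v\<in>C. disjoint_paths ?V ?E 1 u v)"
      unfolding C using ks dp by (intro conjI)
  qed
  have osr: "k_OSR (0 + 1) (?V - {}) ?E" unfolding k_OSR_def Diff_empty add_0 using uc ex1 all by (intro conjI)
  have cs: "\<forall>C. sink_component (?V - {}) ?E C \<longrightarrow> 2 * 0 + 1 \<le> card C"
  proof (intro allI impI)
    fix C assume "sink_component (?V - {}) ?E C"
    then have "C = {0}" using sc[of C] by simp
    then show "2 * 0 + 1 \<le> card C" by simp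
  qed
  have pd: "\<forall>i\<in>?V. PD0 i \<subseteq> ?V" by (auto simp: PD0_def)
  show ?thesis
    unfolding admissible_system_def in_G_di_def
    using osr cs pd by (intro conjI) auto
qed


theorem theorem7:
  fixes valid :: "'v \<Rightarrow> bool"
  assumes "\<exists>a b. a \<noteq> b \<and> valid a \<and> valid b"
  shows "\<not> (\<exists>P :: ('s, 'v, 'm) protocol.
             \<forall>Pi PD f F. admissible_system Pi PD f F \<longrightarrow> solves_consensus valid P Pi PD F)"
proof
  assume "\<exists>P :: ('s, 'v, 'm) protocol.
             \<forall>Pi PD f F. admissible_system Pi PD f F \<longrightarrow> solves_consensus valid P Pi PD F"
  then obtain P :: "('s, 'v, 'm) protocol" where
    H: "\<And>Pi PD f F. admissible_system Pi PD f F \<Longrightarrow> solves_consensus valid P Pi PD F" by blast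
  obtain a b where ab: "a \<noteq> b" "valid a" "valid b" using assms by blast
  define D1 :: "nat \<Rightarrow> nat \<Rightarrow> nat \<Rightarrow> 'm \<times> nat set \<Rightarrow> nat" where "D1 = (\<lambda>s t0 r x. Suc t0)"
  have ps1: "partially_synchronous Pi F D1" for Pi F
    unfolding partially_synchronous_def D1_def by (auto intro!: exI[of _ 0] exI[of _ 1])
  define c0 :: "nat \<Rightarrow> nat" where "c0 = (\<lambda>_. 0)"
  have s0: "solves_consensus valid P {0} PD0 {}" using H[OF adm0] .
  from s0[unfolded solves_consensus_def, THEN spec[of _ "\<lambda>_. a"], THEN spec[of _ c0], THEN spec[of _ D1]] ab ps1
  obtain v where v: "decides P {0} PD0 {} (\<lambda>_. a) c0 D1 0 v"
    and vv: "\<exists>j\<in>{0}. a = v" by fastforce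
  then have "v = a" by auto
  with v obtain T0 where T0: "p_decision P (state_at P {0} PD0 {} (\<lambda>_. a) c0 D1 T0 0) = Some a"
    "\<forall>t'<T0. p_decision P (state_at P {0} PD0 {} (\<lambda>_. a) c0 D1 t' 0) = None"
    unfolding decides_def by blast
  have s1: "solves_consensus valid P {0,1,2,3} PD0 {0}" using H[OF adm1] .
  from s1[unfolded solves_consensus_def, THEN spec[of _ "\<lambda>_. b"], THEN spec[of _ c0], THEN spec[of _ D1]] ab ps1
  obtain w where w: "decides P {0,1,2,3} PD0 {0} (\<lambda>_. b) c0 D1 1 w"
    and ww: "\<exists>j\<in>{0,1,2,3::nat}. b = w" by fastforce
  then have "w = b" by auto
  with w obtain T1 where T1: "p_decision P (state_at P {0,1,2,3} PD0 {0} (\<lambda>_. b) c0 D1 T1 1) = Some b"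
    "\<forall>t'<T1. p_decision P (state_at P {0,1,2,3} PD0 {0} (\<lambda>_. b) c0 D1 t' 1) = None"
    unfolding decides_def by blast
  define L where "L = Suc (T0 + T1)"
  define D2 :: "nat \<Rightarrow> nat \<Rightarrow> nat \<Rightarrow> 'm \<times> nat set \<Rightarrow> nat"
    where "D2 = (\<lambda>s t0 r x. if (s = 0) = (r = 0) then Suc t0 else t0 + L)"
  define prop2 :: "nat \<Rightarrow> 'v" where "prop2 = (\<lambda>i. if i = 0 then a else b)"
  have ps2: "partially_synchronous {0,1,2,3} {} D2"
    unfolding partially_synchronous_def D2_def L_def by (auto intro!: exI[of _ 0] exI[of _ L] simp: L_def)
  have s2: "solves_consensus valid P {0,1,2,3} PD0 {}" using H[OF adm2] .
  have val2: "\<forall>i\<in>{0,1,2,3::nat} - {}. valid (prop2 i)" using ab by (auto simp: prop2_def)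
  have agr: "decides P {0,1,2,3} PD0 {} prop2 c0 D2 0 a \<Longrightarrow> decides P {0,1,2,3} PD0 {} prop2 c0 D2 1 b \<Longrightarrow> a = b"
    using s2[unfolded solves_consensus_def, THEN spec[of _ prop2], THEN spec[of _ c0], THEN spec[of _ D2]] val2 ps2 by blast
  let ?T = "T0 + T1"
  have loc0: "\<forall>i\<in>{0}. fst (cfg P {0} PD0 {} (\<lambda>_. a) c0 D1 t) i = fst (cfg P {0,1,2,3} PD0 {} prop2 c0 D2 t) i
      \<and> fst (snd (cfg P {0} PD0 {} (\<lambda>_. a) c0 D1 t)) i = fst (snd (cfg P {0,1,2,3} PD0 {} prop2 c0 D2 t)) i
      \<and> (\<forall>t0. snd (snd (cfg P {0} PD0 {} (\<lambda>_. a) c0 D1 t)) i t0 = snd (snd (cfg P {0,1,2,3} PD0 {} prop2 c0 D2 t)) i t0)"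
    if "t \<le> ?T" for t
    by (rule locality[OF _ _ _ _ _ _ _ _ that]) (auto simp: prop2_def D1_def D2_def L_def)
  have loc1: "\<forall>i\<in>{1,2,3}. fst (cfg P {0,1,2,3} PD0 {0} (\<lambda>_. b) c0 D1 t) i = fst (cfg P {0,1,2,3} PD0 {} prop2 c0 D2 t) i
      \<and> fst (snd (cfg P {0,1,2,3} PD0 {0} (\<lambda>_. b) c0 D1 t)) i = fst (snd (cfg P {0,1,2,3} PD0 {} prop2 c0 D2 t)) i
      \<and> (\<forall>t0. snd (snd (cfg P {0,1,2,3} PD0 {0} (\<lambda>_. b) c0 D1 t)) i t0 = snd (snd (cfg P {0,1,2,3} PD0 {} prop2 c0 D2 t)) i t0)"
    if "t \<le> ?T" for t
    by (rule locality[OF _ _ _ _ _ _ _ _ that]) (auto simp: prop2_def D1_def D2_def L_def c0_def)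
  have e0: "state_at P {0,1,2,3} PD0 {} prop2 c0 D2 t 0 = state_at P {0} PD0 {} (\<lambda>_. a) c0 D1 t 0"
    if "t \<le> T0" for t using loc0[of t] that unfolding state_at_def by simp
  have e1: "state_at P {0,1,2,3} PD0 {} prop2 c0 D2 t 1 = state_at P {0,1,2,3} PD0 {0} (\<lambda>_. b) c0 D1 t 1"
    if "t \<le> T1" for t using loc1[of t] that unfolding state_at_def by simp
  have d0: "decides P {0,1,2,3} PD0 {} prop2 c0 D2 0 a"
    unfolding decides_def using T0 e0 by (intro exI[of _ T0]) auto
  have d1: "decides P {0,1,2,3} PD0 {} prop2 c0 D2 1 b"
    unfolding decides_def using T1 e1 by (intro exI[of _ T1]) auto
  show False using agr[OF d0 d1] ab(1) by simp
qed

end
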